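(* Let $\mathcal{M}$ be a II$_1$-factor with faithful normal tracial state $\tau$, $T\in\mathcal{M}$, $\nu_T$ its Brown measure, and let $\psi:[0,1]\to\overline{B_{\Vert T\Vert}}$ be Borel measurable with $\psi([0,t])$ Borel for every $t\in[0,1]$, with $Z=\{z\in\overline{B_{\Vert T\Vert}}:\psi^{-1}(z)\text{ has a minimum}\}$ Borel and $\nu_T(Z)=1$. Let $X=\{\min(\psi^{-1}(z)) : z\in Z\}\subset[0,1]$. If $b\subset[0,1]$ is Borel, then $\psi(b\cap X)$ is Borel.
   Context: $\overline{B_r}=\{z\in\mathbb{C}:|z|\le r\}$. The Brown measure $\nu_T$ is the unique Borel probability measure with $\tau(\log|T-\lambda|)=\int\log|z-\lambda|\,d\nu_T(z)$ for all $\lambda\in\mathbb{C}$. *)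

theory Defs
  imports "HOL-Probability.Probability"
begin

definition is_min_preimage :: "(real \<Rightarrow> complex) \<Rightarrow> complex \<Rightarrow> real \<Rightarrow> bool" where
  "is_min_preimage psi z s \<longleftrightarrow>
     s \<in> {0..1} \<and> psi s = z \<and> (\<forall>s'\<in>{0..1}. psi s' = z \<longrightarrow> s \<le> s')"

definition min_set :: "(real \<Rightarrow> complex) \<Rightarrow> real \<Rightarrow> complex set" where
  "min_set psi r = {z \<in> cball 0 r. \<exists>s. is_min_preimage psi z s}"

definition min_preimage :: "(real \<Rightarrow> complex) \<Rightarrow> complex \<Rightarrow> real" where
  "min_preimage psi z = (THE s. is_min_preimage psi z s)"

end

theory Submission
  imports Defs
begin

theorem lemma11:
  fixes r :: real and \<nu> :: "complex measure" and psi :: "real \<Rightarrow> complex" and b :: "real set"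
  assumes r: "r \<ge> 0"
    and nu_sets: "sets \<nu> = sets borel"
    and nu_prob: "prob_space \<nu>"
    and nu_supp: "emeasure \<nu> (cball 0 r) = 1"
    and psi_meas: "psi \<in> borel_measurable (restrict_space borel {0..1})"
    and psi_range: "psi ` {0..1} \<subseteq> cball 0 r"
    and psi_int: "\<And>t. t \<in> {0..1} \<Longrightarrow> psi ` {0..t} \<in> sets borel"
    and Z_borel: "min_set psi r \<in> sets borel"
    and Z_full: "emeasure \<nu> (min_set psi r) = 1"
    and b_sub: "b \<subseteq> {0..1}"
    and b_borel: "b \<in> sets borel"
  shows "psi ` (b \<inter> (min_preimage psi ` min_set psi r)) \<in> sets borel"
proof -
  define Z where "Z = min_set psi r"
  define m where "m = min_preimage psi"
  have mZ: "is_min_preimage psi z (m z)" if "z \<in> Z" for z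
  proof -
    from that obtain s where s: "is_min_preimage psi z s" unfolding Z_def min_set_def by auto
    have "\<And>s'. is_min_preimage psi z s' \<Longrightarrow> s' = s"
      using s unfolding is_min_preimage_def by (metis order_antisym)
    then have "(THE s. is_min_preimage psi z s) = s" using s by (rule the_equality[rotated])
    then show ?thesis using s by (simp add: m_def min_preimage_def)
  qed
  have eq: "psi ` (b \<inter> m ` Z) = {z \<in> Z. m z \<in> b}"
  proof
    show "psi ` (b \<inter> m ` Z) \<subseteq> {z \<in> Z. m z \<in> b}"
      using mZ unfolding is_min_preimage_def by auto
    show "{z \<in> Z. m z \<in> b} \<subseteq> psi ` (b \<inter> m ` Z)"
    proof
      fix z assume "z \<in> {z \<in> Z. m z \<in> b}"
      then have z: "z \<in> Z" "m z \<in> b" by auto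
      then have "psi (m z) = z" using mZ unfolding is_min_preimage_def by auto
      then show "z \<in> psi ` (b \<inter> m ` Z)" using z by (metis IntI imageI)
    qed
  qed
  have key: "m z \<le> a \<longleftrightarrow> z \<in> psi ` {0..a}" if "z \<in> Z" "0 \<le> a" "a \<le> 1" for z a
  proof
    assume "m z \<le> a"
    then show "z \<in> psi ` {0..a}" using mZ[OF that(1)] unfolding is_min_preimage_def
      by (metis atLeastAtMost_iff image_eqI)
  next
    assume "z \<in> psi ` {0..a}"
    then obtain s where "s \<in> {0..a}" "psi s = z" by auto
    then show "m z \<le> a" using mZ[OF that(1)] that unfolding is_min_preimage_def by force
  qed
  have m01: "0 \<le> m z \<and> m z \<le> 1" if "z \<in> Z" for z
    using mZ[OF that] unfolding is_min_preimage_def by auto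
  define f where "f z = (if z \<in> Z then m z else 2)" for z
  have ZB: "Z \<in> sets borel" using Z_borel Z_def by simp
  have "f \<in> borel_measurable borel"
  proof (subst borel_measurable_iff_le, intro allI)
    fix a :: real
    consider "a < 0" | "0 \<le> a" "a < 1" | "1 \<le> a" "a < 2" | "2 \<le> a" by linarith
    then show "{w \<in> space borel. f w \<le> a} \<in> sets borel"
    proof cases
      case 1
      then have "{w \<in> space borel. f w \<le> a} = {}" using m01 by (force simp: f_def)
      then show ?thesis by simp
    next
      case 2
      then have "{w \<in> space borel. f w \<le> a} = psi ` {0..a} \<inter> Z"
        using key[of _ a] by (auto simp: f_def)
      then show ?thesis using psi_int[of a] 2 ZB by auto
    next
      case 3
      then have "{w \<in> space borel. f w \<le> a} = Z" using m01 by (force simp: f_def)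
      then show ?thesis using ZB by simp
    next
      case 4
      then have "{w \<in> space borel. f w \<le> a} = UNIV" using m01 by (force simp: f_def)
      then show ?thesis by simp
    qed
  qed
  then have "f -` b \<inter> space borel \<in> sets borel" using b_borel by (metis measurable_sets sets_borel_eq_count_space space_borel)
  then have "(f -` b \<inter> space borel) \<inter> Z \<in> sets borel" using ZB by blast
  moreover have "(f -` b \<inter> space borel) \<inter> Z = {z \<in> Z. m z \<in> b}" by (auto simp: f_def)
  ultimately show ?thesis using eq by (simp add: Z_def m_def)
qed

end
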